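(* Let $P$ be a minimal Fano polytope in $\mathbb{R}^3$ with vertex set $\{x_1,x_2,x_3,x_4,x_5\}$ such that $x_2,x_3,x_4,x_5$ are coplanar and are the vertices of a parallelogram. Then, up to the action of $GL(3,\mathbb{Z})$, $P$ is the convex hull of $\{(1,0,0),(0,1,0),(-1,-1,0),(1,1,1),(0,0,-1)\}$.
   Context: A Fano polytope is a convex polytope $P\subset\mathbb{R}^3$ with vertices in $\mathbb{Z}^3$ such that the only lattice point of $P$ that is not a vertex is the origin, which lies strictly in the interior of $P$. A Fano polytope with vertex set $\{x_1,\ldots,x_k\}$ is minimal if for every $j$ the convex hull of $\{x_1,\ldots,x_k\}\setminus\{x_j\}$ is not a Fano polytope. *)

theory Defs
  imports "HOL-Analysis.Analysis"
begin

definition lattice3 :: "(real^3) set" where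
  "lattice3 = {x. \<forall>i. x $ i \<in> \<int>}"

definition vertices :: "(real^3) set \<Rightarrow> (real^3) set" where
  "vertices P = {v. v extreme_point_of P}"

definition fano :: "(real^3) set \<Rightarrow> bool" where
  "fano P \<longleftrightarrow> polytope P \<and> vertices P \<subseteq> lattice3 \<and>
     P \<inter> lattice3 = vertices P \<union> {0} \<and> 0 \<in> interior P"

definition minimal_fano :: "(real^3) set \<Rightarrow> bool" where
  "minimal_fano V \<longleftrightarrow> finite V \<and> fano (convex hull V) \<and> vertices (convex hull V) = V \<and>
     (\<forall>x\<in>V. \<not> fano (convex hull (V - {x})))"

definition parallelogram :: "real^3 \<Rightarrow> real^3 \<Rightarrow> real^3 \<Rightarrow> real^3 \<Rightarrow> bool" where
  "parallelogram a b c d \<longleftrightarrow> a + c = b + d \<and> \<not> collinear {a, b, c}"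

text \<open>GL(3,Z): integer matrices with integer inverse, i.e. determinant +-1.\<close>
definition GL3Z :: "(real^3^3) set" where
  "GL3Z = {A. (\<forall>i j. A $ i $ j \<in> \<int>) \<and> \<bar>det A\<bar> = 1}"

end

theory Submission
  imports Defs
begin

lemma trip_id: fixes x p q u :: "real^3"
  shows "(p \<bullet> cross3 q u) *\<^sub>R x = (x \<bullet> cross3 q u) *\<^sub>R p + (x \<bullet> cross3 u p) *\<^sub>R q + (x \<bullet> cross3 p q) *\<^sub>R u"
  unfolding vec_eq_iff forall_3 by (simp add: cross3_def inner_vec_def sum_3 vector_3) algebra

lemma trip_cyc: fixes p q u :: "real^3"
  shows "p \<bullet> cross3 q u = u \<bullet> cross3 p q" "p \<bullet> cross3 q u = q \<bullet> cross3 u p"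
  by (simp_all add: cross3_simps)

lemma lat_add: "x \<in> lattice3 \<Longrightarrow> y \<in> lattice3 \<Longrightarrow> x + y \<in> lattice3"
  by (simp add: lattice3_def Ints_add)
lemma lat_diff: "x \<in> lattice3 \<Longrightarrow> y \<in> lattice3 \<Longrightarrow> x - y \<in> lattice3"
  by (simp add: lattice3_def Ints_diff)
lemma lat_uminus: "x \<in> lattice3 \<Longrightarrow> - x \<in> lattice3"
  by (simp add: lattice3_def Ints_minus)
lemma lat_scale: "x \<in> lattice3 \<Longrightarrow> k \<in> \<int> \<Longrightarrow> k *\<^sub>R x \<in> lattice3"
  by (simp add: lattice3_def Ints_mult)
lemma lat_zero: "0 \<in> lattice3"
  by (simp add: lattice3_def)
lemma lat_inner: "x \<in> lattice3 \<Longrightarrow> y \<in> lattice3 \<Longrightarrow> x \<bullet> y \<in> \<int>"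
  by (simp add: lattice3_def inner_vec_def sum_3 Ints_add Ints_mult)
lemma lat_cross: "x \<in> lattice3 \<Longrightarrow> y \<in> lattice3 \<Longrightarrow> cross3 x y \<in> lattice3"
  unfolding lattice3_def forall_3 by (simp add: cross3_def vector_3 Ints_diff Ints_mult)

lemma interior_halfspace:
  fixes S :: "(real^3) set"
  assumes "0 \<in> interior S" "\<forall>x\<in>S. g \<bullet> x + k \<ge> 0" "g \<noteq> 0"
  shows "k > 0"
proof -
  obtain e where e: "e > 0" "ball 0 e \<subseteq> S" using assms(1) mem_interior by blast
  define x where "x = - ((e/2) / norm g) *\<^sub>R g"
  have ng: "norm g > 0" using assms(3) by simp
  have "norm x = e/2" using ng e by (simp add: x_def)
  then have "x \<in> S" using e by auto
  then have "g \<bullet> x + k \<ge> 0" using assms(2) by blast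
  moreover have "g \<bullet> x = - (e/2) * norm g"
    using ng by (simp add: x_def inner_commute power2_norm_eq_inner[symmetric] power2_eq_square)
  ultimately have "k \<ge> (e/2) * norm g" by linarith
  moreover have "(e/2) * norm g > 0" using ng e by simp
  ultimately show ?thesis by linarith
qed

lemma hull_halfspace:
  assumes "\<forall>v\<in>V. g \<bullet> v + k \<ge> 0" "x \<in> convex hull V"
  shows "g \<bullet> x + k \<ge> (0::real)"
proof -
  have "convex hull V \<subseteq> {x. g \<bullet> x \<ge> -k}"
    by (rule hull_minimal) (use assms(1) convex_halfspace_ge in force)+
  then show ?thesis using assms(2) by force
qed

lemma interior_hull_pos:
  fixes V :: "(real^3) set"
  assumes "0 \<in> interior (convex hull V)" "\<forall>v\<in>V. g \<bullet> v + k \<ge> 0" "g \<noteq> 0"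
  shows "k > 0"
  using interior_halfspace[OF assms(1) _ assms(3)] hull_halfspace[OF assms(2)] by blast

lemma seg_mem: "convex S \<Longrightarrow> x \<in> S \<Longrightarrow> y \<in> S \<Longrightarrow> 0 \<le> t \<Longrightarrow> t \<le> 1 \<Longrightarrow> (1 - t) *\<^sub>R x + t *\<^sub>R y \<in> S"
  by (rule convexD) auto

lemma conv4_mem:
  assumes "convex S" "v0 \<in> S" "v1 \<in> S" "v2 \<in> S" "v3 \<in> S"
    "l0 \<ge> 0" "l1 \<ge> 0" "l2 \<ge> 0" "l3 \<ge> 0" "l0 + l1 + l2 + l3 = 1"
  shows "l0 *\<^sub>R v0 + l1 *\<^sub>R v1 + l2 *\<^sub>R v2 + l3 *\<^sub>R v3 \<in> S"
proof -
  define l where "l = (\<lambda>i::nat. if i = 0 then l0 else if i = 1 then l1 else if i = 2 then l2 else l3)"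
  define y where "y = (\<lambda>i::nat. if i = 0 then v0 else if i = 1 then v1 else if i = 2 then v2 else v3)"
  have "(\<Sum>j\<in>{..<4}. l j *\<^sub>R y j) \<in> S"
    apply (rule convex_sum)
    using assms by (auto simp: l_def y_def lessThan_nat_numeral)
  then show ?thesis by (simp add: l_def y_def lessThan_nat_numeral add_ac)
qed

lemma aff4:
  fixes x v0 v1 v2 v3 :: "'a::real_vector"
  assumes "x - v0 = a *\<^sub>R (v1 - v0) + b *\<^sub>R (v2 - v0) + c *\<^sub>R (v3 - v0)"
  shows "x = (1 - a - b - c) *\<^sub>R v0 + a *\<^sub>R v1 + b *\<^sub>R v2 + c *\<^sub>R v3"
proof -
  have "x = v0 + (x - v0)" by simp
  also have "\<dots> = (1 - a - b - c) *\<^sub>R v0 + a *\<^sub>R v1 + b *\<^sub>R v2 + c *\<^sub>R v3"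
    unfolding assms by (simp add: scaleR_diff_right scaleR_diff_left algebra_simps)
  finally show ?thesis .
qed

lemma tetra_interior:
  fixes v0 v1 v2 v3 :: "real^3"
  assumes T: "(v1 - v0) \<bullet> cross3 (v2 - v0) (v3 - v0) \<noteq> 0"
    and l: "l1 > 0" "l2 > 0" "l3 > 0" "l1 + l2 + l3 < 1"
    and eq: "v0 + l1 *\<^sub>R (v1 - v0) + l2 *\<^sub>R (v2 - v0) + l3 *\<^sub>R (v3 - v0) = 0"
  shows "0 \<in> interior (convex hull {v0,v1,v2,v3})"
proof -
  define u1 where "u1 = v1 - v0"
  define u2 where "u2 = v2 - v0"
  define u3 where "u3 = v3 - v0"
  define T where "T = u1 \<bullet> cross3 u2 u3"
  have T0: "T \<noteq> 0" using T by (simp add: T_def u1_def u2_def u3_def)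
  define f1 where "f1 = (\<lambda>x. ((x - v0) \<bullet> cross3 u2 u3) / T)"
  define f2 where "f2 = (\<lambda>x. ((x - v0) \<bullet> cross3 u3 u1) / T)"
  define f3 where "f3 = (\<lambda>x. ((x - v0) \<bullet> cross3 u1 u2) / T)"
  define U where "U = {x. 0 < f1 x} \<inter> {x. 0 < f2 x} \<inter> {x. 0 < f3 x} \<inter> {x. f1 x + f2 x + f3 x < 1}"
  have oU: "open U" unfolding U_def f1_def f2_def f3_def
    by (intro open_Int open_Collect_less continuous_intros) (use T0 in auto)
  have e0: "0 - v0 = l1 *\<^sub>R u1 + l2 *\<^sub>R u2 + l3 *\<^sub>R u3"
    using eq unfolding u1_def u2_def u3_def by (simp add: algebra_simps eq_neg_iff_add_eq_0)
  have c1: "u2 \<bullet> cross3 u3 u1 = T" "u3 \<bullet> cross3 u1 u2 = T"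
    using trip_cyc[of u1 u2 u3] by (simp_all add: T_def)
  have "f1 0 = l1" unfolding f1_def e0 using T0 by (simp add: inner_add_left dot_cross_self T_def)
  moreover have "f2 0 = l2" unfolding f2_def e0 using T0 c1 by (simp add: inner_add_left dot_cross_self)
  moreover have "f3 0 = l3" unfolding f3_def e0 using T0 c1 by (simp add: inner_add_left dot_cross_self)
  ultimately have "0 \<in> U" using l by (simp add: U_def)
  moreover have "U \<subseteq> convex hull {v0,v1,v2,v3}"
  proof
    fix x assume "x \<in> U"
    then have pos: "0 < f1 x" "0 < f2 x" "0 < f3 x" "f1 x + f2 x + f3 x < 1" by (auto simp: U_def)
    have h: "T *\<^sub>R (x - v0) = ((x - v0) \<bullet> cross3 u2 u3) *\<^sub>R u1 + ((x - v0) \<bullet> cross3 u3 u1) *\<^sub>R u2 + ((x - v0) \<bullet> cross3 u1 u2) *\<^sub>R u3"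
      unfolding T_def by (rule trip_id)
    have "x - v0 = (1/T) *\<^sub>R (T *\<^sub>R (x - v0))" using T0 by simp
    also have "\<dots> = (1/T) *\<^sub>R (((x - v0) \<bullet> cross3 u2 u3) *\<^sub>R u1 + ((x - v0) \<bullet> cross3 u3 u1) *\<^sub>R u2 + ((x - v0) \<bullet> cross3 u1 u2) *\<^sub>R u3)"
      using h by simp
    also have "\<dots> = f1 x *\<^sub>R u1 + f2 x *\<^sub>R u2 + f3 x *\<^sub>R u3"
      unfolding f1_def f2_def f3_def by (simp add: scaleR_add_right)
    finally have "x - v0 = f1 x *\<^sub>R u1 + f2 x *\<^sub>R u2 + f3 x *\<^sub>R u3" .
    then have xe: "x = (1 - f1 x - f2 x - f3 x) *\<^sub>R v0 + f1 x *\<^sub>R v1 + f2 x *\<^sub>R v2 + f3 x *\<^sub>R v3"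
      unfolding u1_def u2_def u3_def by (rule aff4)
    have m: "(1 - f1 x - f2 x - f3 x) *\<^sub>R v0 + f1 x *\<^sub>R v1 + f2 x *\<^sub>R v2 + f3 x *\<^sub>R v3 \<in> convex hull {v0,v1,v2,v3}"
      by (rule conv4_mem) (use pos in \<open>auto intro: hull_inc\<close>)
    show "x \<in> convex hull {v0,v1,v2,v3}"
      by (subst xe) (rule m)
  qed
  ultimately show ?thesis using oU interiorI by blast
qed

lemma fano_sub:
  assumes fin: "finite V" and vert: "vertices (convex hull V) = V" and fa: "fano (convex hull V)"
    and y: "y \<in> V" and int: "0 \<in> interior (convex hull (V - {y}))"
  shows "fano (convex hull (V - {y}))"
proof -
  let ?P = "convex hull V"
  let ?Q = "convex hull (V - {y})"
  have QP: "?Q \<subseteq> ?P" by (rule hull_mono) auto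
  have ext: "\<forall>v\<in>V. v extreme_point_of ?P" using vert unfolding vertices_def by blast
  have "vertices ?P \<subseteq> lattice3" using fa unfolding fano_def by blast
  then have latV: "V \<subseteq> lattice3" using vert by simp
  have "?P \<inter> lattice3 = vertices ?P \<union> {0}" using fa unfolding fano_def by blast
  then have PL: "?P \<inter> lattice3 = V \<union> {0}" using vert by simp
  have vQ: "vertices ?Q \<subseteq> V - {y}" unfolding vertices_def using extreme_point_of_convex_hull by blast
  have "y extreme_point_of ?P" using ext y by blast
  then have "convex (?P - {y})" using extreme_point_of_stillconvex[OF convex_convex_hull] by blast
  moreover have "V - {y} \<subseteq> ?P - {y}" using hull_subset[of V convex] by blast
  ultimately have "?Q \<subseteq> ?P - {y}" by (metis hull_minimal)
  then have yQ: "y \<notin> ?Q" by blast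
  have pol: "polytope ?Q" unfolding polytope_def using fin by blast
  have "?Q \<inter> lattice3 \<subseteq> vertices ?Q \<union> {0}"
  proof
    fix z assume z: "z \<in> ?Q \<inter> lattice3"
    then have "z \<in> V \<union> {0}" using PL QP by blast
    moreover
    { assume zV: "z \<in> V"
      then have "z \<noteq> y" using yQ z by blast
      have "z extreme_point_of ?P" using ext zV by blast
      then have "z extreme_point_of ?Q" using z QP unfolding extreme_point_of_def by blast
      then have "z \<in> vertices ?Q" by (simp add: vertices_def) }
    ultimately show "z \<in> vertices ?Q \<union> {0}" by blast
  qed
  moreover have "vertices ?Q \<union> {0} \<subseteq> ?Q \<inter> lattice3"
  proof -
    have "vertices ?Q \<subseteq> ?Q" unfolding vertices_def extreme_point_of_def by blast
    moreover have "vertices ?Q \<subseteq> lattice3" using vQ latV by blast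
    moreover have "0 \<in> ?Q" using interior_subset[of ?Q] int by blast
    ultimately show ?thesis using lat_zero by blast
  qed
  ultimately have eqQ: "?Q \<inter> lattice3 = vertices ?Q \<union> {0}" by (rule subset_antisym)
  have "vertices ?Q \<subseteq> lattice3" using vQ latV by blast
  then show ?thesis unfolding fano_def using pol eqQ int by blast
qed

lemma coord_pos:
  fixes a p q u g :: "real^3"
  assumes int: "0 \<in> interior (convex hull {a + u, a, a + p, a + p + q, a + q})"
    and "g \<noteq> 0" "k + g \<bullet> a \<ge> 0" "k + g \<bullet> a + g \<bullet> p \<ge> 0" "k + g \<bullet> a + g \<bullet> p + g \<bullet> q \<ge> 0"
      "k + g \<bullet> a + g \<bullet> q \<ge> 0" "k + g \<bullet> a + g \<bullet> u \<ge> 0"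
  shows "k > 0"
  by (rule interior_hull_pos[OF int _ assms(2)]) (use assms(3-) in \<open>auto simp: inner_add_right\<close>)

lemma coord_pos2:
  fixes a p q u g :: "real^3"
  assumes int: "0 \<in> interior (convex hull {a + u, a, a + p, a + p + q, a + q})"
    and "g \<noteq> 0" "c0 \<ge> 0" "c0 + g \<bullet> p \<ge> 0" "c0 + g \<bullet> p + g \<bullet> q \<ge> 0"
      "c0 + g \<bullet> q \<ge> 0" "c0 + g \<bullet> u \<ge> 0"
  shows "c0 - g \<bullet> a > 0"
  by (rule coord_pos[OF int assms(2)]) (use assms(3-) in auto)

lemma geom_part:
  fixes a p q u :: "real^3"
  assumes dist: "distinct [a + u, a, a + p, a + p + q, a + q]"
    and n0: "cross3 p q \<noteq> 0"
    and int: "0 \<in> interior (convex hull {a + u, a, a + p, a + p + q, a + q})"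
    and nint: "\<forall>y\<in>{a + u, a, a + p, a + p + q, a + q}. 0 \<notin> interior (convex hull ({a + u, a, a + p, a + p + q, a + q} - {y}))"
  shows "\<exists>\<mu>>0. a + u = - \<mu> *\<^sub>R (2 *\<^sub>R a + p + q)" "a \<bullet> cross3 p q \<noteq> 0"
proof -
  define n where "n = cross3 p q"
  define C1 where "C1 = cross3 q u"
  define C2 where "C2 = cross3 u p"
  define \<Delta> where "\<Delta> = p \<bullet> C1"
  have cyc: "u \<bullet> n = \<Delta>" "q \<bullet> C2 = \<Delta>" using trip_cyc[of p q u] by (simp_all add: \<Delta>_def C1_def C2_def n_def)
  have z: "p \<bullet> n = 0" "q \<bullet> n = 0" "q \<bullet> C1 = 0" "u \<bullet> C1 = 0" "p \<bullet> C2 = 0" "u \<bullet> C2 = 0"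
    by (simp_all add: n_def C1_def C2_def dot_cross_self)
  have D0: "\<Delta> \<noteq> 0"
  proof
    assume D: "\<Delta> = 0"
    have "- (n \<bullet> a) > 0"
      by (rule coord_pos[OF int, of n]) (use n0 z cyc D in \<open>simp_all add: n_def inner_commute\<close>)
    moreover have "n \<bullet> a > 0"
      by (rule coord_pos[OF int, of "-n"]) (use n0 z cyc D in \<open>simp_all add: n_def inner_commute\<close>)
    ultimately show False by simp
  qed
  define s where "s = - (a \<bullet> C1) / \<Delta>"
  define t where "t = - (a \<bullet> C2) / \<Delta>"
  define r where "r = - (a \<bullet> n) / \<Delta>"
  have "\<Delta> *\<^sub>R a = (a \<bullet> C1) *\<^sub>R p + (a \<bullet> C2) *\<^sub>R q + (a \<bullet> n) *\<^sub>R u"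
    unfolding \<Delta>_def C1_def C2_def n_def by (rule trip_id)
  then have eq0: "a + s *\<^sub>R p + t *\<^sub>R q + r *\<^sub>R u = 0"
    using D0 unfolding s_def t_def r_def
    by (simp add: vec_eq_iff field_simps)
  have zc: "n \<bullet> p = 0" "n \<bullet> q = 0" "C1 \<bullet> q = 0" "C1 \<bullet> u = 0" "C2 \<bullet> p = 0" "C2 \<bullet> u = 0"
    "n \<bullet> u = \<Delta>" "C2 \<bullet> q = \<Delta>" "C1 \<bullet> p = \<Delta>"
    using z cyc by (simp_all add: inner_commute \<Delta>_def)
  have ca: "n \<bullet> a = a \<bullet> n" "C1 \<bullet> a = a \<bullet> C1" "C2 \<bullet> a = a \<bullet> C2" by (simp_all add: inner_commute)
  have rpos: "r > 0"
  proof -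
    have "0 - ((1/\<Delta>) *\<^sub>R n) \<bullet> a > 0"
      by (rule coord_pos2[OF int]) (use D0 zc in \<open>auto\<close>)
    then show ?thesis using ca by (simp add: r_def)
  qed
  have spos: "s > 0"
  proof -
    have "0 - ((1/\<Delta>) *\<^sub>R C1) \<bullet> a > 0"
      by (rule coord_pos2[OF int]) (use D0 zc in \<open>auto\<close>)
    then show ?thesis using ca by (simp add: s_def)
  qed
  have tpos: "t > 0"
  proof -
    have "0 - ((1/\<Delta>) *\<^sub>R C2) \<bullet> a > 0"
      by (rule coord_pos2[OF int]) (use D0 zc in \<open>auto\<close>)
    then show ?thesis using ca by (simp add: t_def)
  qed
  have "(n + C1) \<bullet> p = \<Delta>" "(n + C2) \<bullet> q = \<Delta>" using zc by (simp_all add: inner_add_left)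
  then have nz: "n + C1 \<noteq> 0" "n + C2 \<noteq> 0" using D0 by auto
  have rs: "1 - r - s > 0"
  proof -
    have "1 - (- (1/\<Delta>) *\<^sub>R (n + C1)) \<bullet> a > 0"
      by (rule coord_pos2[OF int]) (use D0 zc nz in \<open>auto simp: inner_add_left\<close>)
    then show ?thesis using ca D0 by (simp add: r_def s_def inner_add_left inner_diff_left field_simps)
  qed
  have rt: "1 - r - t > 0"
  proof -
    have "1 - (- (1/\<Delta>) *\<^sub>R (n + C2)) \<bullet> a > 0"
      by (rule coord_pos2[OF int]) (use D0 zc nz in \<open>auto simp: inner_add_left\<close>)
    then show ?thesis using ca D0 by (simp add: r_def t_def inner_add_left inner_diff_left field_simps)
  qed
  show "a \<bullet> cross3 p q \<noteq> 0" using rpos by (auto simp: r_def n_def)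
  let ?V = "{a + u, a, a + p, a + p + q, a + q}"
  have "\<not> (s + t + r < 1)"
  proof
    assume h: "s + t + r < 1"
    have "0 \<in> interior (convex hull {a, a + p, a + q, a + u})"
      by (rule tetra_interior[of _ _ _ _ s t r]) (use D0 spos tpos rpos h eq0 in \<open>simp_all add: \<Delta>_def C1_def add.commute\<close>)
    moreover have "?V - {a + p + q} = {a, a + p, a + q, a + u}" using dist by auto
    ultimately show False using nint by auto
  qed
  moreover have "\<not> (s + t + r > 1)"
  proof
    assume h: "s + t + r > 1"
    have T: "(a + p - (a + p + q)) \<bullet> cross3 (a + q - (a + p + q)) (a + u - (a + p + q)) = - \<Delta>"
      by (simp add: \<Delta>_def C1_def cross3_simps)
    have "0 \<in> interior (convex hull {a + p + q, a + p, a + q, a + u})"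
      by (rule tetra_interior[of _ _ _ _ "1 - t - r" "1 - s - r" r]) (use D0 rs rt rpos h eq0 T in \<open>simp_all add: vec_eq_iff algebra_simps\<close>)
    moreover have "?V - {a} = {a + p + q, a + p, a + q, a + u}" using dist by auto
    ultimately show False using nint by auto
  qed
  moreover have "\<not> (s > t)"
  proof
    assume h: "s > t"
    have T: "(a + p - a) \<bullet> cross3 (a + p + q - a) (a + u - a) = \<Delta>"
      by (simp add: \<Delta>_def C1_def cross3_simps)
    have "0 \<in> interior (convex hull {a, a + p, a + p + q, a + u})"
      by (rule tetra_interior[of _ _ _ _ "s - t" t r]) (use D0 rs rt rpos tpos h eq0 T in \<open>simp_all add: vec_eq_iff algebra_simps\<close>)
    moreover have "?V - {a + q} = {a, a + p, a + p + q, a + u}" using dist by auto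
    ultimately show False using nint by auto
  qed
  moreover have "\<not> (t > s)"
  proof
    assume h: "t > s"
    have T: "(a + q - a) \<bullet> cross3 (a + p + q - a) (a + u - a) = - \<Delta>"
      by (simp add: \<Delta>_def C1_def cross3_simps)
    have "0 \<in> interior (convex hull {a, a + q, a + p + q, a + u})"
      by (rule tetra_interior[of _ _ _ _ "t - s" s r]) (use D0 rs rt rpos spos h eq0 T in \<open>simp_all add: vec_eq_iff algebra_simps\<close>)
    moreover have "?V - {a + p} = {a, a + q, a + p + q, a + u}" using dist by auto
    ultimately show False using nint by auto
  qed
  ultimately have st: "t = s" "r = 1 - 2 * s" by linarith+
  show "\<exists>\<mu>>0. a + u = - \<mu> *\<^sub>R (2 *\<^sub>R a + p + q)"
  proof (intro exI conjI)
    show "s / r > 0" using spos rpos by simp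
    show "a + u = - (s / r) *\<^sub>R (2 *\<^sub>R a + p + q)"
      unfolding vec_eq_iff
    proof
      fix i
      have e: "a$i + s * p$i + t * q$i + r * u$i = 0" using eq0 by (simp add: vec_eq_iff)
      have "r * (a$i + u$i) = - s * (2 * a$i + p$i + q$i)" using e st by algebra
      then show "(a + u)$i = (- (s / r) *\<^sub>R (2 *\<^sub>R a + p + q))$i"
        using rpos by (simp add: field_simps)
    qed
  qed
qed

lemma par_mem:
  fixes a p q w :: "real^3"
  assumes "0 \<le> \<beta>" "\<beta> \<le> 1" "0 \<le> \<gamma>" "\<gamma> \<le> 1"
  shows "a + \<beta> *\<^sub>R p + \<gamma> *\<^sub>R q \<in> convex hull {w, a, a + p, a + p + q, a + q}"
proof -
  have "((1 - \<beta>) * (1 - \<gamma>)) *\<^sub>R a + (\<beta> * (1 - \<gamma>)) *\<^sub>R (a + p) + (\<beta> * \<gamma>) *\<^sub>R (a + p + q) + ((1 - \<beta>) * \<gamma>) *\<^sub>R (a + q)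
      \<in> convex hull {w, a, a + p, a + p + q, a + q}"
    apply (rule conv4_mem)
    using assms by (auto intro!: hull_inc mult_nonneg_nonneg simp del: mult_nonneg_nonneg, simp add: algebra_simps)
  moreover have "((1 - \<beta>) * (1 - \<gamma>)) *\<^sub>R a + (\<beta> * (1 - \<gamma>)) *\<^sub>R (a + p) + (\<beta> * \<gamma>) *\<^sub>R (a + p + q) + ((1 - \<beta>) * \<gamma>) *\<^sub>R (a + q)
      = a + \<beta> *\<^sub>R p + \<gamma> *\<^sub>R q"
    unfolding vec_eq_iff by (simp add: algebra_simps)
  ultimately show ?thesis by simp
qed

lemma pyr_mem:
  fixes a p q :: "real^3"
  assumes mu: "\<mu> > 0" and d: "0 < \<delta>" "\<delta> \<le> 1"
    and b: "0 \<le> \<beta>" "\<beta> \<le> 1 - \<delta>" and g: "0 \<le> \<gamma>" "\<gamma> \<le> 1 - \<delta>"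
  shows "(1 - \<delta>) *\<^sub>R a + \<beta> *\<^sub>R p + \<gamma> *\<^sub>R q \<in> convex hull {- \<mu> *\<^sub>R (2 *\<^sub>R a + p + q), a, a + p, a + p + q, a + q}"
proof -
  define w where "w = - \<mu> *\<^sub>R (2 *\<^sub>R a + p + q)"
  define r where "r = \<delta> / (1 + 2 * \<mu>)"
  have r0: "r > 0" using mu d by (simp add: r_def)
  have e3: "r * (1 + 2 * \<mu>) = \<delta>" using mu by (simp add: r_def)
  have "r * (1 + \<mu>) \<le> r * (1 + 2 * \<mu>)" using r0 mu by (intro mult_left_mono) auto
  then have rle: "r * (1 + \<mu>) \<le> \<delta>" using e3 by simp
  have "r + r * (2 * \<mu>) = \<delta>" using e3 by (simp add: algebra_simps)
  moreover have "r * (2 * \<mu>) > 0" using r0 mu by simp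
  ultimately have r1: "r < 1" using d by linarith
  define b0 where "b0 = (\<beta> + \<mu> * r) / (1 - r)"
  define g0 where "g0 = (\<gamma> + \<mu> * r) / (1 - r)"
  have e1: "(1 - r) * b0 = \<beta> + \<mu> * r" and e2: "(1 - r) * g0 = \<gamma> + \<mu> * r" using r1 by (simp_all add: b0_def g0_def)
  have "b0 \<ge> 0" "g0 \<ge> 0" using r1 r0 mu b g by (simp_all add: b0_def g0_def)
  moreover have "b0 \<le> 1" "g0 \<le> 1" using r1 r0 mu b g rle by (simp_all add: b0_def g0_def field_simps)
  ultimately have B: "a + b0 *\<^sub>R p + g0 *\<^sub>R q \<in> convex hull {w, a, a + p, a + p + q, a + q}"
    by (intro par_mem)
  have W: "w \<in> convex hull {w, a, a + p, a + p + q, a + q}" by (rule hull_inc) simp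
  have "(1 - r) *\<^sub>R (a + b0 *\<^sub>R p + g0 *\<^sub>R q) + r *\<^sub>R w \<in> convex hull {w, a, a + p, a + p + q, a + q}"
    by (rule seg_mem[OF convex_convex_hull B W]) (use r0 r1 in auto)
  moreover have "(1 - r) *\<^sub>R (a + b0 *\<^sub>R p + g0 *\<^sub>R q) + r *\<^sub>R w = (1 - \<delta>) *\<^sub>R a + \<beta> *\<^sub>R p + \<gamma> *\<^sub>R q"
    unfolding vec_eq_iff
  proof
    fix i
    show "((1 - r) *\<^sub>R (a + b0 *\<^sub>R p + g0 *\<^sub>R q) + r *\<^sub>R w) $ i = ((1 - \<delta>) *\<^sub>R a + \<beta> *\<^sub>R p + \<gamma> *\<^sub>R q) $ i"
      using e1 e2 e3 by (simp add: w_def) algebra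
  qed
  ultimately show ?thesis by (simp add: w_def)
qed

lemma base_lemma:
  fixes a p q w z :: "real^3"
  assumes D: "a \<bullet> cross3 p q \<noteq> 0" and wdef: "w = - \<mu> *\<^sub>R (2 *\<^sub>R a + p + q)" and mu: "\<mu> > 0"
    and lat: "a \<in> lattice3" "p \<in> lattice3" "q \<in> lattice3"
    and Hlat: "\<forall>z\<in>lattice3. z \<in> convex hull {w, a, a + p, a + p + q, a + q} \<longrightarrow> z \<in> {0, w, a, a + p, a + p + q, a + q}"
    and z: "z \<in> lattice3" "z \<bullet> cross3 p q = 0"
  shows "\<exists>k1 k2. k1 \<in> \<int> \<and> k2 \<in> \<int> \<and> z = k1 *\<^sub>R p + k2 *\<^sub>R q"
proof -
  define n where "n = cross3 p q"
  define D where "D = a \<bullet> n"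
  have D0: "D \<noteq> 0" using D by (simp add: D_def n_def)
  define F1 where "F1 = cross3 q a"
  define F2 where "F2 = cross3 a p"
  have v: "p \<bullet> n = 0" "q \<bullet> n = 0" "a \<bullet> F1 = 0" "q \<bullet> F1 = 0" "p \<bullet> F1 = D"
     "a \<bullet> F2 = 0" "p \<bullet> F2 = 0" "q \<bullet> F2 = D"
    using trip_cyc[of p q a] trip_cyc[of a p q]
    by (simp_all add: n_def F1_def F2_def D_def dot_cross_self)
  have "D *\<^sub>R z = (z \<bullet> n) *\<^sub>R a + (z \<bullet> F1) *\<^sub>R p + (z \<bullet> F2) *\<^sub>R q"
    unfolding D_def n_def F1_def F2_def by (rule trip_id)
  then have "D *\<^sub>R z = (z \<bullet> F1) *\<^sub>R p + (z \<bullet> F2) *\<^sub>R q" using z(2) by (simp add: n_def)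
  then have zrep: "z = ((z \<bullet> F1) / D) *\<^sub>R p + ((z \<bullet> F2) / D) *\<^sub>R q"
    using D0 by (simp add: vec_eq_iff field_simps)
  define \<beta> where "\<beta> = (z \<bullet> F1) / D"
  define \<gamma> where "\<gamma> = (z \<bullet> F2) / D"
  define \<beta>' where "\<beta>' = \<beta> - of_int \<lfloor>\<beta>\<rfloor>"
  define \<gamma>' where "\<gamma>' = \<gamma> - of_int \<lfloor>\<gamma>\<rfloor>"
  have b': "0 \<le> \<beta>'" "\<beta>' < 1" "0 \<le> \<gamma>'" "\<gamma>' < 1"
    unfolding \<beta>'_def \<gamma>'_def by linarith+
  define y where "y = a + \<beta>' *\<^sub>R p + \<gamma>' *\<^sub>R q"
  have "y = (a + z) - of_int \<lfloor>\<beta>\<rfloor> *\<^sub>R p - of_int \<lfloor>\<gamma>\<rfloor> *\<^sub>R q"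
    unfolding y_def \<beta>'_def \<gamma>'_def using zrep by (simp add: \<beta>_def \<gamma>_def algebra_simps)
  then have ylat: "y \<in> lattice3"
    using lat z by (auto intro!: lat_add lat_diff lat_scale)
  have yP: "y \<in> convex hull {w, a, a + p, a + p + q, a + q}"
    unfolding y_def using b' by (intro par_mem) auto
  have yv: "y \<bullet> n = D" "y \<bullet> F1 = \<beta>' * D" "y \<bullet> F2 = \<gamma>' * D"
    using v by (simp_all add: y_def inner_add_left D_def)
  have wn: "w \<bullet> n = - 2 * \<mu> * D" using v by (simp add: wdef inner_add_left D_def)
  have "y \<in> {0, w, a, a + p, a + p + q, a + q}" using Hlat ylat yP by blast
  moreover have "y \<noteq> 0" using yv D0 by auto
  moreover have "y \<noteq> w"
  proof
    assume "y = w"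
    then have "D = - 2 * \<mu> * D" using yv wn by simp
    then have "D * (1 + 2 * \<mu>) = 0" by (simp add: algebra_simps)
    then show False using D0 mu by simp
  qed
  ultimately have "y \<in> {a, a + p, a + p + q, a + q}" by blast
  then have "\<beta>' * D \<in> {0, D}" "\<gamma>' * D \<in> {0, D}"
    using yv v by (auto simp: inner_add_left)
  then have "\<beta>' = 0" "\<gamma>' = 0" using D0 b' by auto
  then have "z = of_int \<lfloor>\<beta>\<rfloor> *\<^sub>R p + of_int \<lfloor>\<gamma>\<rfloor> *\<^sub>R q"
    using zrep unfolding \<beta>'_def \<gamma>'_def \<beta>_def \<gamma>_def by simp
  then show ?thesis using Ints_of_int by blast
qed

lemma ceil_frac:
  fixes j h :: int
  assumes h: "h > 0"
  shows "(0::real) \<le> of_int \<lceil>of_int j / of_int h :: real\<rceil> - of_int j / of_int h"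
    and "of_int \<lceil>of_int j / of_int h :: real\<rceil> - of_int j / of_int h \<le> 1 - 1 / (of_int h :: real)"
proof -
  define c where "c = \<lceil>of_int j / of_int h :: real\<rceil>"
  show "(0::real) \<le> of_int \<lceil>of_int j / of_int h :: real\<rceil> - of_int j / of_int h"
    using le_of_int_ceiling[of "of_int j / of_int h :: real"] by linarith
  have "of_int c - 1 < (of_int j / of_int h :: real)" using ceiling_correct c_def by blast
  then have "(of_int c - 1) * of_int h < (of_int j :: real)" using h by (simp add: field_simps)
  then have "(c - 1) * h < j" by (metis of_int_diff of_int_less_iff of_int_mult of_int_1)
  then have "c * h \<le> j + h - 1" by (simp add: algebra_simps)
  then have "(of_int c :: real) * of_int h \<le> of_int j + of_int h - 1" by (metis of_int_le_iff of_int_mult of_int_diff of_int_add of_int_1)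
  moreover have hp: "(of_int h :: real) > 0" using h by simp
  ultimately have "(of_int c :: real) \<le> (of_int j + of_int h - 1) / of_int h" by (simp add: pos_le_divide_eq)
  moreover have "(of_int j + of_int h - 1) / of_int h = of_int j / of_int h + 1 - 1 / (of_int h :: real)"
    using hp by (simp add: field_simps)
  ultimately have "(of_int c :: real) - of_int j / of_int h \<le> 1 - 1 / of_int h" by linarith
  then show "of_int \<lceil>of_int j / of_int h :: real\<rceil> - of_int j / of_int h \<le> 1 - 1 / (of_int h :: real)"
    by (simp add: c_def)
qed

lemma lattice_gen:
  fixes a p q w :: "real^3"
  assumes D: "a \<bullet> cross3 p q \<noteq> 0" and wdef: "w = - \<mu> *\<^sub>R (2 *\<^sub>R a + p + q)" and mu: "\<mu> > 0"
    and lat: "a \<in> lattice3" "p \<in> lattice3" "q \<in> lattice3"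
    and Hlat: "\<forall>z\<in>lattice3. z \<in> convex hull {w, a, a + p, a + p + q, a + q} \<longrightarrow> z \<in> {0, w, a, a + p, a + p + q, a + q}"
  shows "\<forall>z\<in>lattice3. \<exists>k0 k1 k2. k0 \<in> \<int> \<and> k1 \<in> \<int> \<and> k2 \<in> \<int> \<and> z = k0 *\<^sub>R a + k1 *\<^sub>R p + k2 *\<^sub>R q"
proof -
  note base = base_lemma[OF D wdef mu lat Hlat]
  define n where "n = cross3 p q"
  define D where "D = a \<bullet> n"
  have D0: "D \<noteq> 0" using D by (simp add: D_def n_def)
  define \<sigma> where "\<sigma> = (if D > 0 then 1 else -1 :: real)"
  have s0: "\<sigma> \<noteq> 0" "\<sigma> \<in> \<int>" by (auto simp: \<sigma>_def)
  define N where "N = (\<lambda>z. \<sigma> * (z \<bullet> n))"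
  have nlat: "n \<in> lattice3" using lat by (simp add: n_def lat_cross)
  have Nint: "\<And>z. z \<in> lattice3 \<Longrightarrow> N z \<in> \<int>" using s0 nlat by (simp add: N_def lat_inner Ints_mult)
  have Nv: "N p = 0" "N q = 0" "N a = \<bar>D\<bar>" "N 0 = 0"
    by (simp_all add: N_def n_def dot_cross_self \<sigma>_def D_def[unfolded n_def])
  have Nadd: "\<And>x y. N (x + y) = N x + N y" "\<And>x y. N (x - y) = N x - N y" "\<And>k x. N (k *\<^sub>R x) = k * N x" "\<And>x. N (- x) = - N x"
    by (simp_all add: N_def inner_add_left inner_diff_left algebra_simps)
  have N0: "\<And>z. N z = 0 \<Longrightarrow> z \<bullet> cross3 p q = 0" using s0 by (simp add: N_def n_def)
  have "\<bar>D\<bar> \<in> \<int>" using lat nlat by (simp add: D_def lat_inner)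
  then obtain j0 where j0: "\<bar>D\<bar> = of_int j0" by (auto elim: Ints_cases)
  define k0 where "k0 = nat j0"
  have k0: "real k0 = \<bar>D\<bar>" "k0 > 0" using j0 D0 by (auto simp: k0_def)
  define S where "S = {k::nat. 0 < k \<and> (\<exists>z\<in>lattice3. N z = real k)}"
  have k0S: "k0 \<in> S" using k0 lat Nv by (auto simp: S_def)
  define e where "e = (LEAST k. k \<in> S)"
  have eS: "e \<in> S" using k0S unfolding e_def by (rule LeastI)
  have ek0: "e \<le> k0" using k0S unfolding e_def by (rule Least_le)
  obtain g where g: "g \<in> lattice3" "N g = real e" and e0: "e > 0" using eS by (auto simp: S_def)
  have dvd: "\<exists>m::int. N z = of_int m * real e" if z: "z \<in> lattice3" for z
  proof -
    obtain j where j: "N z = of_int j" using Nint[OF z] by (auto elim: Ints_cases)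
    define m where "m = j div int e"
    define \<rho> where "\<rho> = j mod int e"
    have jm: "j = m * int e + \<rho>" by (simp add: m_def \<rho>_def)
    have \<rho>b: "0 \<le> \<rho>" "\<rho> < int e" using e0 by (simp_all add: \<rho>_def)
    have z'lat: "z - of_int m *\<^sub>R g \<in> lattice3" using z g by (auto intro!: lat_diff lat_scale)
    have Nz': "N (z - of_int m *\<^sub>R g) = of_int \<rho>"
      using j g jm by (simp add: Nadd)
    have "\<rho> = 0"
    proof (rule ccontr)
      assume "\<rho> \<noteq> 0"
      then have "nat \<rho> \<in> S" using \<rho>b z'lat Nz' by (auto simp: S_def intro!: bexI[of _ "z - of_int m *\<^sub>R g"])
      then have "e \<le> nat \<rho>" unfolding e_def by (rule Least_le)
      then show False using \<rho>b by linarith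
    qed
    then show ?thesis using j jm by auto
  qed
  have ek: "e = k0"
  proof (rule ccontr)
    assume "e \<noteq> k0"
    then have elt: "e < k0" using ek0 by simp
    obtain h where h: "N a = of_int h * real e" using dvd lat by blast
    have "of_int h * real e > real e" using h elt Nv k0 by simp
    then have "(1::real) * real e < of_int h * real e" by simp
    then have "(1::real) < of_int h" using e0 by (simp only: mult_less_cancel_right)
    then have h2: "h \<ge> 2" by simp
    have hpos: "(of_int h :: real) > 0" using h2 by simp
    have z0lat: "of_int h *\<^sub>R g - a \<in> lattice3" using g lat by (auto intro!: lat_diff lat_scale)
    have "N (of_int h *\<^sub>R g - a) = 0" using h g by (simp add: Nadd)
    then obtain k1 k2 where kk: "k1 \<in> \<int>" "k2 \<in> \<int>" "of_int h *\<^sub>R g - a = k1 *\<^sub>R p + k2 *\<^sub>R q"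
      using base[OF z0lat] N0 by blast
    obtain j1 j2 where jj: "k1 = of_int j1" "k2 = of_int j2" using kk by (auto elim!: Ints_cases)
    have gform: "g = (1 / of_int h) *\<^sub>R (a + k1 *\<^sub>R p + k2 *\<^sub>R q)"
    proof -
      have "of_int h *\<^sub>R g = a + k1 *\<^sub>R p + k2 *\<^sub>R q" using kk(3) by (simp add: algebra_simps)
      then show ?thesis using hpos by (simp add: vec_eq_iff field_simps)
    qed
    define c1 where "c1 = \<lceil>of_int j1 / of_int h :: real\<rceil>"
    define c2 where "c2 = \<lceil>of_int j2 / of_int h :: real\<rceil>"
    define y where "y = a - g + of_int c1 *\<^sub>R p + of_int c2 *\<^sub>R q"
    have ylat: "y \<in> lattice3" using g lat by (auto simp: y_def intro!: lat_add lat_diff lat_scale)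
    have yform: "y = (1 - 1 / of_int h) *\<^sub>R a + (of_int c1 - of_int j1 / of_int h) *\<^sub>R p + (of_int c2 - of_int j2 / of_int h) *\<^sub>R q"
      unfolding y_def gform jj using hpos by (simp add: vec_eq_iff field_simps)
    have "y \<in> convex hull {w, a, a + p, a + p + q, a + q}"
      unfolding yform wdef
      by (rule pyr_mem[OF mu]) (use hpos h2 ceil_frac[of h j1] ceil_frac[of h j2] in \<open>simp_all add: c1_def c2_def\<close>)
    then have yin: "y \<in> {0, w, a, a + p, a + p + q, a + q}" using Hlat ylat by blast
    have Ny: "N y = real k0 - real e" using g Nv k0 by (simp add: y_def Nadd)
    have "N w = - 2 * \<mu> * real k0" using Nv k0 by (simp add: wdef Nadd)
    moreover have "- 2 * \<mu> * real k0 < 0" using mu k0 by simp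
    ultimately have "N w \<noteq> N y" using Ny elt by simp
    moreover have "N (a + p) \<noteq> N y" "N (a + p + q) \<noteq> N y" "N (a + q) \<noteq> N y" "N a \<noteq> N y" "N 0 \<noteq> N y"
      using Nv k0 Ny e0 elt by (simp_all add: Nadd)
    ultimately show False using yin by auto
  qed
  show ?thesis
  proof
    fix z assume z: "z \<in> lattice3"
    obtain m where m: "N z = of_int m * real e" using dvd[OF z] by blast
    have zl: "z - of_int m *\<^sub>R a \<in> lattice3" using z lat by (auto intro!: lat_diff lat_scale)
    have "N (z - of_int m *\<^sub>R a) = 0" using m ek k0 Nv by (simp add: Nadd)
    then obtain k1 k2 where kk: "k1 \<in> \<int>" "k2 \<in> \<int>" "z - of_int m *\<^sub>R a = k1 *\<^sub>R p + k2 *\<^sub>R q"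
      using base[OF zl] N0 by blast
    have "z = of_int m *\<^sub>R a + k1 *\<^sub>R p + k2 *\<^sub>R q" using kk(3) by (simp add: algebra_simps)
    then show "\<exists>k0 k1 k2. k0 \<in> \<int> \<and> k1 \<in> \<int> \<and> k2 \<in> \<int> \<and> z = k0 *\<^sub>R a + k1 *\<^sub>R p + k2 *\<^sub>R q"
      using kk Ints_of_int by blast
  qed
qed

lemma mu_one:
  fixes a p q w :: "real^3"
  assumes D: "a \<bullet> cross3 p q \<noteq> 0" and wdef: "w = - \<mu> *\<^sub>R (2 *\<^sub>R a + p + q)" and mu: "\<mu> > 0"
    and lat: "a \<in> lattice3" "p \<in> lattice3" "q \<in> lattice3" and wlat: "w \<in> lattice3"
    and Hlat: "\<forall>z\<in>lattice3. z \<in> convex hull {w, a, a + p, a + p + q, a + q} \<longrightarrow> z \<in> {0, w, a, a + p, a + p + q, a + q}"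
    and zP: "0 \<in> convex hull {w, a, a + p, a + p + q, a + q}"
  shows "\<mu> = 1"
proof -
  note gen = lattice_gen[OF D wdef mu lat Hlat]
  define n where "n = cross3 p q"
  define D where "D = a \<bullet> n"
  have D0: "D \<noteq> 0" using D by (simp add: D_def n_def)
  define F1 where "F1 = cross3 q a"
  have v: "p \<bullet> n = 0" "q \<bullet> n = 0" "a \<bullet> F1 = 0" "q \<bullet> F1 = 0" "p \<bullet> F1 = D"
    using trip_cyc[of p q a] by (simp_all add: n_def F1_def D_def dot_cross_self)
  obtain k0 k1 k2 where kk: "k0 \<in> \<int>" "k1 \<in> \<int>" "k2 \<in> \<int>" "w = k0 *\<^sub>R a + k1 *\<^sub>R p + k2 *\<^sub>R q"
    using gen wlat by blast
  have "w \<bullet> F1 = k1 * D" using v kk(4) by (simp add: inner_add_left)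
  moreover have "w \<bullet> F1 = - \<mu> * D" using v by (simp add: wdef inner_add_left)
  ultimately have "(k1 + \<mu>) * D = 0" by (simp add: algebra_simps)
  then have "k1 + \<mu> = 0" using D0 by simp
  then have "\<mu> = - k1" by linarith
  then have muI: "\<mu> \<in> \<int>" using kk(2) by simp
  show "\<mu> = 1"
  proof (rule ccontr)
    assume m1: "\<mu> \<noteq> 1"
    obtain m where m: "\<mu> = of_int m" using muI by (auto elim: Ints_cases)
    have m2: "\<mu> \<ge> 2" using m m1 mu by simp
    define y where "y = - (2 *\<^sub>R a + p + q)"
    have "2 *\<^sub>R a + p + q \<in> lattice3" using lat by (intro lat_add lat_scale) auto
    then have ylat: "y \<in> lattice3" unfolding y_def by (rule lat_uminus)
    have "(1 - 1/\<mu>) *\<^sub>R 0 + (1/\<mu>) *\<^sub>R w \<in> convex hull {w, a, a + p, a + p + q, a + q}"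
    proof (rule seg_mem[OF convex_convex_hull zP])
      show "w \<in> convex hull {w, a, a + p, a + p + q, a + q}" by (rule hull_inc) simp
      show "0 \<le> 1 / \<mu>" using mu by simp
      show "1 / \<mu> \<le> 1" using m2 by simp
    qed
    moreover have "(1 - 1/\<mu>) *\<^sub>R 0 + (1/\<mu>) *\<^sub>R w = y" using mu by (simp add: wdef y_def)
    ultimately have yin: "y \<in> {0, w, a, a + p, a + p + q, a + q}" using Hlat ylat by simp
    have yn: "y \<bullet> n = - 2 * D" using v by (simp add: y_def inner_add_left inner_diff_left D_def)
    have "w \<bullet> n = - \<mu> * (2 * D)" using v by (simp add: wdef inner_add_left D_def)
    moreover have "\<mu> * (2 * D) \<noteq> 2 * D" using m1 D0 by simp
    ultimately have "w \<bullet> n \<noteq> y \<bullet> n" using yn by simp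
    moreover have "(a + p) \<bullet> n \<noteq> y \<bullet> n" "(a + p + q) \<bullet> n \<noteq> y \<bullet> n" "(a + q) \<bullet> n \<noteq> y \<bullet> n" "a \<bullet> n \<noteq> y \<bullet> n" "0 \<bullet> n \<noteq> y \<bullet> n"
      using v yn D0 by (simp_all add: inner_add_left D_def)
    ultimately show False using yin by auto
  qed
qed

lemma construct_A:
  fixes a p q :: "real^3"
  assumes lat: "a \<in> lattice3" "p \<in> lattice3" "q \<in> lattice3"
    and gen: "\<forall>z\<in>lattice3. \<exists>k0 k1 k2. k0 \<in> \<int> \<and> k1 \<in> \<int> \<and> k2 \<in> \<int> \<and> z = k0 *\<^sub>R a + k1 *\<^sub>R p + k2 *\<^sub>R q"
    and D: "a \<bullet> cross3 p q \<noteq> 0"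
  shows "\<exists>A\<in>GL3Z. A *v a = vector [1,0,0] \<and> A *v p = vector [0,1,1] \<and> A *v q = vector [-1,0,-1]"
proof -
  define F0 where "F0 = cross3 p q"
  define F1 where "F1 = cross3 q a"
  define F2 where "F2 = cross3 a p"
  define D where "D = a \<bullet> F0"
  have D0: "D \<noteq> 0" using D by (simp add: D_def F0_def)
  have v: "a \<bullet> F0 = D" "p \<bullet> F0 = 0" "q \<bullet> F0 = 0" "a \<bullet> F1 = 0" "q \<bullet> F1 = 0" "p \<bullet> F1 = D"
     "a \<bullet> F2 = 0" "p \<bullet> F2 = 0" "q \<bullet> F2 = D"
    using trip_cyc[of p q a] trip_cyc[of a p q]
    by (simp_all add: F0_def F1_def F2_def D_def dot_cross_self)
  define a' :: "real^3" where "a' = vector [1,0,0]"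
  define p' :: "real^3" where "p' = vector [0,1,1]"
  define q' :: "real^3" where "q' = vector [-1,0,-1]"
  define A :: "real^3^3" where "A = (\<chi> i j. (a'$i * F0$j + p'$i * F1$j + q'$i * F2$j) / D)"
  have Av: "A *v x = (1/D) *\<^sub>R ((x \<bullet> F0) *\<^sub>R a' + (x \<bullet> F1) *\<^sub>R p' + (x \<bullet> F2) *\<^sub>R q')" for x
    unfolding vec_eq_iff
    by (simp add: A_def matrix_vector_mult_def sum_3 inner_vec_def add_divide_distrib sum_divide_distrib algebra_simps)
  have Aa: "A *v a = a'" "A *v p = p'" "A *v q = q'" using v D0 by (simp_all add: Av)
  have Alin: "A *v (k0 *\<^sub>R a + k1 *\<^sub>R p + k2 *\<^sub>R q) = k0 *\<^sub>R a' + k1 *\<^sub>R p' + k2 *\<^sub>R q'" for k0 k1 k2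
    using Aa by (simp add: matrix_vector_right_distrib matrix_vector_mult_scaleR)
  have a'l: "a' \<in> lattice3" "p' \<in> lattice3" "q' \<in> lattice3"
    unfolding lattice3_def forall_3 by (simp_all add: a'_def p'_def q'_def)
  have Aint: "\<forall>i j. A $ i $ j \<in> \<int>"
  proof (intro allI)
    fix i j
    have "axis j 1 \<in> lattice3" by (simp add: lattice3_def axis_def)
    then obtain k0 k1 k2 where kk: "k0 \<in> \<int>" "k1 \<in> \<int>" "k2 \<in> \<int>" "axis j 1 = k0 *\<^sub>R a + k1 *\<^sub>R p + k2 *\<^sub>R q"
      using gen by blast
    have "A *v axis j 1 \<in> lattice3" unfolding kk(4) Alin using kk a'l
      by (auto intro!: lat_add lat_scale)
    moreover have "(A *v axis j 1) $ i = A $ i $ j"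
      by (simp add: matrix_vector_mult_basis column_def)
    ultimately show "A $ i $ j \<in> \<int>" by (metis lattice3_def mem_Collect_eq)
  qed
  define B :: "real^3^3" where "B = (\<chi> i j. if j = 1 then a$i else if j = 2 then (a + p + q)$i else - (a + q)$i)"
  have n3: "(2::3) \<noteq> 1" "(3::3) \<noteq> 1" "(3::3) \<noteq> 2" by simp_all
  have Bv: "B *v x = (x$1 + x$2 - x$3) *\<^sub>R a + x$2 *\<^sub>R p + (x$2 - x$3) *\<^sub>R q" for x
    unfolding vec_eq_iff using n3 by (simp add: B_def matrix_vector_mult_def sum_3 algebra_simps)
  have AB: "A ** B = mat 1"
    unfolding matrix_eq
  proof
    fix x :: "real^3"
    have "(A ** B) *v x = A *v (B *v x)" by (simp add: matrix_vector_mul_assoc)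
    also have "\<dots> = (x$1 + x$2 - x$3) *\<^sub>R a' + x$2 *\<^sub>R p' + (x$2 - x$3) *\<^sub>R q'" by (simp add: Bv Alin)
    also have "\<dots> = mat 1 *v x" unfolding vec_eq_iff forall_3
      by (simp add: a'_def p'_def q'_def)
    finally show "(A ** B) *v x = mat 1 *v x" .
  qed
  have "det A * det B = 1" using det_mul[of A B] AB by simp
  moreover have "det A \<in> \<int>" unfolding det_3 using Aint by (intro Ints_add Ints_diff Ints_mult) auto
  moreover have "det B \<in> \<int>"
  proof -
    have "\<forall>i j. B $ i $ j \<in> \<int>" using lat n3 by (auto simp: B_def lattice3_def Ints_add Ints_minus)
    then show ?thesis unfolding det_3 by (intro Ints_add Ints_diff Ints_mult) auto
  qed
  ultimately have "\<bar>det A\<bar> = 1"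
  proof -
    assume h1: "det A * det B = 1" and h2: "det A \<in> \<int>" and h3: "det B \<in> \<int>"
    obtain i where i: "det A = of_int i" using h2 by (auto elim: Ints_cases)
    obtain j where j: "det B = of_int j" using h3 by (auto elim: Ints_cases)
    have "of_int (i * j) = (1::real)" using h1 i j by simp
    then have "i * j = 1" by (simp only: of_int_eq_1_iff)
    then have "i = 1 \<or> i = -1" using zmult_eq_1_iff by blast
    then show ?thesis using i by auto
  qed
  then have "A \<in> GL3Z" using Aint by (simp add: GL3Z_def)
  then show ?thesis using Aa by (auto simp: a'_def p'_def q'_def)
qed


theorem lemma4p5:
  fixes x1 x2 x3 x4 x5 :: "real^3"
  assumes "card {x1, x2, x3, x4, x5} = 5"
    and "minimal_fano {x1, x2, x3, x4, x5}"
    and "coplanar {x2, x3, x4, x5}"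
    and "\<exists>a b c d. {x2, x3, x4, x5} = {a, b, c, d} \<and> parallelogram a b c d"
  shows "\<exists>A\<in>GL3Z. (\<lambda>x. A *v x) ` (convex hull {x1, x2, x3, x4, x5}) =
           convex hull {vector [1,0,0], vector [0,1,0], vector [-1,-1,0],
                        vector [1,1,1], vector [0,0,-1]}"
proof -
  obtain a b c d where abcd: "{x2, x3, x4, x5} = {a, b, c, d}" and par: "parallelogram a b c d"
    using assms(4) by blast
  have acbd: "a + c = b + d" and ncol: "\<not> collinear {a, b, c}" using par by (auto simp: parallelogram_def)
  define p where "p = b - a"
  define q where "q = d - a"
  define u where "u = x1 - a"
  have eb: "b = a + p" and ed: "d = a + q" and ew: "x1 = a + u"
    by (simp_all add: p_def q_def u_def)
  have "c = (a + c) - a" by simp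
  also have "\<dots> = b + d - a" using acbd by simp
  also have "\<dots> = a + p + q" by (simp add: p_def q_def algebra_simps)
  finally have ec: "c = a + p + q" .
  define V where "V = {a + u, a, a + p, a + p + q, a + q}"
  have "{x1, x2, x3, x4, x5} = insert x1 {a, b, c, d}" using abcd by simp
  then have Veq: "{x1, x2, x3, x4, x5} = V" by (simp add: V_def eb ec ed ew)
  have "card (set [a + u, a, a + p, a + p + q, a + q]) = length [a + u, a, a + p, a + p + q, a + q]"
    using assms(1) Veq by (simp add: V_def)
  then have dist: "distinct [a + u, a, a + p, a + p + q, a + q]" by (rule card_distinct)
  have mf: "minimal_fano V" using assms(2) Veq by simp
  then have fin: "finite V" and fa: "fano (convex hull V)" and vert: "vertices (convex hull V) = V"
    and nf: "\<forall>x\<in>V. \<not> fano (convex hull (V - {x}))"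
    by (simp_all add: minimal_fano_def)
  have int: "0 \<in> interior (convex hull V)" using fa by (simp add: fano_def)
  have nint: "\<forall>y\<in>V. 0 \<notin> interior (convex hull (V - {y}))" using fano_sub[OF fin vert fa] nf by blast
  have n0: "cross3 p q \<noteq> 0"
  proof
    assume h: "cross3 p q = 0"
    have "cross3 (a - b) (c - b) = - cross3 p q" by (simp add: eb ec)
    then have "collinear {0, a - b, c - b}" using h cross_eq_0 by simp
    then have "collinear {a, b, c}" using collinear_3[of a b c] by simp
    then show False using ncol by simp
  qed
  obtain \<mu> where mu: "\<mu> > 0" and wdef0: "a + u = - \<mu> *\<^sub>R (2 *\<^sub>R a + p + q)"
    using geom_part(1)[OF dist n0 int[unfolded V_def] nint[unfolded V_def]] by blast
  have D: "a \<bullet> cross3 p q \<noteq> 0"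
    using geom_part(2)[OF dist n0 int[unfolded V_def] nint[unfolded V_def]] .
  define w where "w = a + u"
  have wdef: "w = - \<mu> *\<^sub>R (2 *\<^sub>R a + p + q)" using wdef0 by (simp add: w_def)
  have "vertices (convex hull V) \<subseteq> lattice3" using fa by (simp add: fano_def)
  then have latV: "V \<subseteq> lattice3" using vert by simp
  have alat: "a \<in> lattice3" and wlat: "w \<in> lattice3" using latV by (auto simp: V_def w_def)
  have "a + p \<in> lattice3" "a + q \<in> lattice3" using latV by (auto simp: V_def)
  then have plat: "p \<in> lattice3" and qlat: "q \<in> lattice3"
    using lat_diff[OF _ alat] by force+
  have V': "V = {w, a, a + p, a + p + q, a + q}" by (simp add: V_def w_def)
  have "convex hull V \<inter> lattice3 = V \<union> {0}" using fa vert by (simp add: fano_def)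
  then have Hlat: "\<forall>z\<in>lattice3. z \<in> convex hull {w, a, a + p, a + p + q, a + q} \<longrightarrow> z \<in> {0, w, a, a + p, a + p + q, a + q}"
    unfolding V' by blast
  have zP: "0 \<in> convex hull {w, a, a + p, a + p + q, a + q}" using int interior_subset V' by blast
  have mu1: "\<mu> = 1" by (rule mu_one[OF D wdef mu alat plat qlat wlat Hlat zP])
  have gen: "\<forall>z\<in>lattice3. \<exists>k0 k1 k2. k0 \<in> \<int> \<and> k1 \<in> \<int> \<and> k2 \<in> \<int> \<and> z = k0 *\<^sub>R a + k1 *\<^sub>R p + k2 *\<^sub>R q"
    by (rule lattice_gen[OF D wdef mu alat plat qlat Hlat])
  obtain A where A: "A \<in> GL3Z" "A *v a = vector [1,0,0]" "A *v p = vector [0,1,1]" "A *v q = vector [-1,0,-1]"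
    using construct_A[OF alat plat qlat gen D] by blast
  have Aw: "A *v w = vector [-1,-1,0]"
  proof -
    have "w = (-1) *\<^sub>R (2 *\<^sub>R a + p + q)" using mu1 wdef by simp
    then have "A *v w = (-1) *\<^sub>R (A *v (2 *\<^sub>R a + p + q))" by (simp only: matrix_vector_mult_scaleR)
    then have "A *v w = (-1) *\<^sub>R (2 *\<^sub>R (A *v a) + A *v p + A *v q)"
      by (simp only: matrix_vector_right_distrib matrix_vector_mult_scaleR)
    also have "\<dots> = vector [-1,-1,0]" unfolding A(2-4) vec_eq_iff forall_3 by simp
    finally show ?thesis .
  qed
  have Ab: "A *v (a + p) = vector [1,1,1]" unfolding matrix_vector_right_distrib A(2-4) vec_eq_iff forall_3 by simp
  have Ac: "A *v (a + p + q) = vector [0,1,0]" unfolding matrix_vector_right_distrib A(2-4) vec_eq_iff forall_3 by simp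
  have Ad: "A *v (a + q) = vector [0,0,-1]" unfolding matrix_vector_right_distrib A(2-4) vec_eq_iff forall_3 by simp
  have img: "(\<lambda>x. A *v x) ` {x1, x2, x3, x4, x5} = {vector [1,0,0], vector [0,1,0], vector [-1,-1,0], vector [1,1,1], vector [0,0,-1]}"
    unfolding Veq V' using Aw Ab Ac Ad A(2) by auto
  show ?thesis
  proof (rule bexI[OF _ A(1)])
    show "(\<lambda>x. A *v x) ` (convex hull {x1, x2, x3, x4, x5}) =
           convex hull {vector [1,0,0], vector [0,1,0], vector [-1,-1,0], vector [1,1,1], vector [0,0,-1]}"
      unfolding img[symmetric] by (rule convex_hull_linear_image) simp
  qed
qed

end
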